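(* For each $i\in\{1,\dots,n\}$ let $(X_{i,1},Y_{i,1}),\dots,(X_{i,k},Y_{i,k})$ be i.i.d. random vectors in $\mathbb R^2$ with common density $f_i$ satisfying $f_i\in L_\infty(\mathbb R^2)$, $\|f_i\|_{L_\infty(B((0,0),R))}\le C_0$, and $f_i=0$ outside $B((0,0),R)$, where $R,C_0>0$; the families for different $i$ are mutually independent. For $(x,y)\in B((0,0),R)$ let $Z^i(x,y)=\min_{1\le j\le k}\sqrt{(X_{i,j}-x)^2+(Y_{i,j}-y)^2}$ and $\overline Z_n(x,y)=\frac1n\sum_{i=1}^nZ^i(x,y)$. Then for every $\eta>0$ and $\delta\in(0,1)$, if $n>\frac{2R^2}{\eta^2}\ln\frac2\delta$, $$\Pr\Big[\min_{(x,y)\in B((0,0),R)}\overline Z_n(x,y)\ge\frac{1}{4\pi RC_0(k+1)}-\eta\Big]>1-\delta.$$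
   Context: $B((0,0),R)$ denotes the closed Euclidean disk of radius $R$ centered at the origin. *)

theory Defs
  imports "HOL-Probability.Probability"
begin

definition nearest_dist :: "nat \<Rightarrow> (nat \<Rightarrow> nat \<Rightarrow> 'a \<Rightarrow> real \<times> real) \<Rightarrow> nat \<Rightarrow> 'a \<Rightarrow> real \<times> real \<Rightarrow> real" where
  "nearest_dist k P i \<omega> z = Min ((\<lambda>j. dist (P i j \<omega>) z) ` {1..k})"

definition mean_nearest_dist :: "nat \<Rightarrow> nat \<Rightarrow> (nat \<Rightarrow> nat \<Rightarrow> 'a \<Rightarrow> real \<times> real) \<Rightarrow> 'a \<Rightarrow> real \<times> real \<Rightarrow> real" where
  "mean_nearest_dist n k P \<omega> z = (\<Sum>i=1..n. nearest_dist k P i \<omega> z) / real n"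

end

theory Submission
  imports Defs
begin


lemma ball_prob:
  fixes M :: "'a measure" and X :: "'a \<Rightarrow> real \<times> real" and f :: "real\<times>real \<Rightarrow> real"
  assumes "prob_space M" "distributed M lborel X (\<lambda>z. ennreal (f z))"
    and "AE z in lborel. f z \<le> C0" and "C0 \<ge> 0" and "r \<ge> 0"
    and that: "S \<subseteq> ball g r" "S \<in> sets lborel"
  shows "measure M (X -` S \<inter> space M) \<le> C0 * pi * r^2"
proof -
  interpret prob_space M by fact
  have "emeasure M (X -` S \<inter> space M) = (\<integral>\<^sup>+x. ennreal (f x) * indicator S x \<partial>lborel)"
    using distributed_emeasure[OF assms(2) that(2)] .
  also have "\<dots> \<le> (\<integral>\<^sup>+x. ennreal C0 * indicator (ball g r) x \<partial>lborel)"
    apply (rule nn_integral_mono_AE)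
    using assms(3) apply eventually_elim
    using that(1) by (auto simp: indicator_def intro: ennreal_leI)
  also have "\<dots> = ennreal C0 * emeasure lborel (ball g r)"
    by (simp add: nn_integral_cmult_indicator)
  also have "\<dots> = ennreal C0 * ennreal (pi * r^2)"
    using \<open>r \<ge> 0\<close> by (subst emeasure_ball) (auto simp: unit_ball_vol_2 mult.commute power2_eq_square)
  also have "\<dots> = ennreal (C0 * pi * r^2)"
    using \<open>r \<ge> 0\<close> \<open>C0 \<ge> 0\<close> by (simp add: ennreal_mult mult.assoc)
  finally show ?thesis
    using \<open>C0 \<ge> 0\<close> \<open>r \<ge> 0\<close> by (simp add: emeasure_eq_measure ennreal_le_iff)
qed

lemma area_ge:
  fixes M :: "'a measure" and X :: "'a \<Rightarrow> real \<times> real" and f :: "real\<times>real \<Rightarrow> real"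
  assumes "prob_space M" "distributed M lborel X (\<lambda>z. ennreal (f z))"
    and "AE z in lborel. f z \<le> C0" and "C0 \<ge> 0" and "R \<ge> 0"
    and "\<And>z. z \<notin> cball 0 R \<Longrightarrow> f z = 0"
  shows "1 \<le> C0 * pi * R^2"
proof -
  interpret prob_space M by fact
  have "emeasure M (space M) = (\<integral>\<^sup>+x. ennreal (f x) \<partial>lborel)"
    using distributed_emeasure[OF assms(2), of UNIV] by simp
  also have "\<dots> \<le> (\<integral>\<^sup>+x. ennreal C0 * indicator (cball (0::real\<times>real) R) x \<partial>lborel)"
    apply (rule nn_integral_mono_AE)
    using assms(3) apply eventually_elim
    using assms(6) by (auto simp: indicator_def intro: ennreal_leI)
  also have "\<dots> = ennreal C0 * emeasure lborel (cball (0::real\<times>real) R)"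
    by (simp add: nn_integral_cmult_indicator)
  also have "\<dots> = ennreal C0 * ennreal (pi * R^2)"
    using \<open>R \<ge> 0\<close> by (subst emeasure_cball) (auto simp: unit_ball_vol_2 mult.commute power2_eq_square)
  also have "\<dots> = ennreal (C0 * pi * R^2)"
    using \<open>R \<ge> 0\<close> \<open>C0 \<ge> 0\<close> by (simp add: ennreal_mult mult.assoc)
  finally show ?thesis
    using \<open>C0 \<ge> 0\<close> \<open>R \<ge> 0\<close> by (simp add: emeasure_eq_measure ennreal_le_iff prob_space)
qed



lemma nd_nonneg: "k \<ge> 1 \<Longrightarrow> 0 \<le> nearest_dist k P i \<omega> z"
  by (simp add: nearest_dist_def Min_ge_iff)

lemma nd_lip: assumes "k \<ge> 1"
  shows "nearest_dist k P i \<omega> z \<le> nearest_dist k P i \<omega> w + dist z w"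
proof -
  have "nearest_dist k P i \<omega> w \<in> (\<lambda>j. dist (P i j \<omega>) w) ` {1..k}"
    unfolding nearest_dist_def using assms by (intro Min_in) auto
  then obtain j where j: "j \<in> {1..k}" "nearest_dist k P i \<omega> w = dist (P i j \<omega>) w" by auto
  have "nearest_dist k P i \<omega> z \<le> dist (P i j \<omega>) z"
    unfolding nearest_dist_def using j by (intro Min_le) auto
  also have "\<dots> \<le> dist (P i j \<omega>) w + dist w z" by (rule dist_triangle)
  finally show ?thesis using j by (simp add: dist_commute)
qed

lemma nd_lt: assumes "k \<ge> 1" "nearest_dist k P i \<omega> z < t"
  shows "\<exists>j\<in>{1..k}. dist (P i j \<omega>) z < t"
proof (rule ccontr)
  assume "\<not> ?thesis"
  then have "t \<le> nearest_dist k P i \<omega> z" using assms(1)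
    unfolding nearest_dist_def by (auto simp: not_less)
  then show False using assms(2) by simp
qed

lemma mean_nonneg: "k \<ge> 1 \<Longrightarrow> 0 \<le> mean_nearest_dist n k P \<omega> z"
  unfolding mean_nearest_dist_def by (intro divide_nonneg_nonneg sum_nonneg nd_nonneg) auto

lemma mean_lip: assumes "k \<ge> 1" "n > 0"
  shows "mean_nearest_dist n k P \<omega> z \<le> mean_nearest_dist n k P \<omega> w + dist z w"
proof -
  have "(\<Sum>i=1..n. nearest_dist k P i \<omega> z) \<le> (\<Sum>i=1..n. nearest_dist k P i \<omega> w + dist z w)"
    by (intro sum_mono nd_lip assms)
  also have "\<dots> = (\<Sum>i=1..n. nearest_dist k P i \<omega> w) + real n * dist z w"
    by (simp add: sum.distrib)
  finally show ?thesis using assms unfolding mean_nearest_dist_def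
    by (simp add: field_simps)
qed

lemma grid:
  assumes "h > 0" "R \<ge> 0"
  obtains G :: "(real\<times>real) set" where "finite G" "real (card G) \<le> (2*R/h+3)^2"
    "\<forall>z\<in>cball 0 R. \<exists>g\<in>G. dist z g \<le> h"
proof -
  define N :: int where "N = \<lceil>R/h\<rceil>"
  define G where "G = (\<lambda>(a,b). (of_int a * h, of_int b * h)) ` ({-N..N} \<times> {-N..N})"
  have fin: "finite G" unfolding G_def by auto
  have "card G \<le> card ({-N..N} \<times> {-N..N})" unfolding G_def by (rule card_image_le) auto
  also have "\<dots> = nat (2*N+1) * nat (2*N+1)" by (simp add: card_cartesian_product)
  finally have "real (card G) \<le> real (nat (2*N+1)) ^ 2" by (simp add: power2_eq_square flip: of_nat_mult)
  moreover have "N \<ge> 0" unfolding N_def using divide_nonneg_pos[OF assms(2) assms(1)] by linarith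
  moreover have "of_int N \<le> R/h + 1" unfolding N_def by linarith
  ultimately have card: "real (card G) \<le> (2*R/h+3)^2"
  proof -
    assume c: "real (card G) \<le> real (nat (2*N+1)) ^ 2" and N0: "N \<ge> 0" and NR: "of_int N \<le> R/h + 1"
    have e: "real (nat (2*N+1)) = 2 * of_int N + 1" using N0 by simp
    have "real (nat (2*N+1)) ^ 2 \<le> (2*R/h+3)^2"
      unfolding e by (rule power_mono) (use N0 NR in auto)
    then show ?thesis using c by linarith
  qed
  have cov: "\<exists>g\<in>G. dist z g \<le> h" if "z \<in> cball 0 R" for z
  proof -
    obtain x y where z: "z = (x,y)" by (cases z)
    have nx: "\<bar>x\<bar> \<le> R" "\<bar>y\<bar> \<le> R" using that z norm_fst_le[of x y] norm_snd_le[of y x]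
      by auto
    have RN: "R/h \<le> of_int N" unfolding N_def by simp
    have xh: "\<bar>x/h\<bar> \<le> R/h" "\<bar>y/h\<bar> \<le> R/h" using nx assms
      by (auto simp: abs_divide divide_right_mono)
    define a where "a = \<lfloor>x/h + 1/2\<rfloor>"
    define b where "b = \<lfloor>y/h + 1/2\<rfloor>"
    have a1: "of_int a \<le> x/h + 1/2" "x/h + 1/2 < of_int a + 1" unfolding a_def by linarith+
    have b1: "of_int b \<le> y/h + 1/2" "y/h + 1/2 < of_int b + 1" unfolding b_def by linarith+
    have "real_of_int a < real_of_int (N+1)" "real_of_int (-N-1) < real_of_int a"
      using a1 xh RN by (simp_all add: abs_le_iff; linarith)+
    then have aN: "a \<in> {-N..N}" by (simp only: of_int_less_iff) auto
    have "real_of_int b < real_of_int (N+1)" "real_of_int (-N-1) < real_of_int b"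
      using b1 xh RN by (simp_all add: abs_le_iff; linarith)+
    then have bN: "b \<in> {-N..N}" by (simp only: of_int_less_iff) auto
    have g: "(of_int a * h, of_int b * h) \<in> G" unfolding G_def using aN bN by force
    have ea: "\<bar>x - of_int a * h\<bar> \<le> h/2"
    proof -
      have "\<bar>x/h - of_int a\<bar> \<le> 1/2" using a1 by linarith
      then have "\<bar>(x/h - of_int a) * h\<bar> \<le> 1/2 * h" using assms by (simp add: abs_mult)
      then show ?thesis using assms by (simp add: algebra_simps)
    qed
    have eb: "\<bar>y - of_int b * h\<bar> \<le> h/2"
    proof -
      have "\<bar>y/h - of_int b\<bar> \<le> 1/2" using b1 by linarith
      then have "\<bar>(y/h - of_int b) * h\<bar> \<le> 1/2 * h" using assms by (simp add: abs_mult)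
      then show ?thesis using assms by (simp add: algebra_simps)
    qed
    have "(x - of_int a * h)^2 \<le> (h/2)^2" using power_mono[OF ea abs_ge_zero, of 2] by simp
    moreover have "(y - of_int b * h)^2 \<le> (h/2)^2" using power_mono[OF eb abs_ge_zero, of 2] by simp
    moreover have "(h/2)^2 = h^2/4" by (simp add: power_divide)
    moreover have "0 \<le> h^2" by simp
    ultimately have "(x - of_int a * h)^2 + (y - of_int b * h)^2 \<le> h^2" by linarith
    then have "dist z (of_int a * h, of_int b * h) \<le> h"
      using assms by (simp add: z dist_Pair_Pair dist_real_def real_sqrt_le_iff')
    then show ?thesis using g by blast
  qed
  show ?thesis using fin card cov by (intro that) auto
qed



lemma ln2_ge_half: "1/2 \<le> ln (2::real)"
proof -
  have "exp (1/2::real) * exp (1/2) = exp 1" by (simp flip: exp_add)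
  also have "\<dots> \<le> 3" by (rule exp_le)
  finally have e: "exp (1/2::real) * exp (1/2) \<le> 3" .
  have "exp (1/2::real) < 2"
  proof (rule ccontr)
    assume "\<not> ?thesis"
    then have "2 * 2 \<le> exp (1/2::real) * exp (1/2)" by (intro mult_mono) auto
    with e show False by simp
  qed
  then have "ln (exp (1/2::real)) < ln 2" by (subst ln_less_cancel_iff) auto
  then show ?thesis by simp
qed

lemma poly_exp: assumes "(u::real) \<ge> 8" shows "(2*u+3)^2 \<le> 2 * exp (7*u^2/32 - 1/2)"
proof -
  define y where "y = 7*u^2/32 - 1/2"
  have s: "u^2 \<ge> 64" using power_mono[OF assms, of 2] by simp
  have y0: "y \<ge> 0" unfolding y_def using s by simp
  have "exp y = exp (y/4) ^ 4" by (simp flip: exp_of_nat_mult)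
  moreover have "(1 + y/4) ^ 4 \<le> exp (y/4) ^ 4"
    by (rule power_mono) (use y0 exp_ge_add_one_self[of "y/4"] in auto)
  ultimately have ey: "(1 + y/4)^4 \<le> exp y" by simp
  define w where "w = 1 + y/4"
  have w: "w = 7/8 + 7*u^2/128" unfolding w_def y_def by (simp add: field_simps)
  have w1: "w \<ge> 35/8" using w s by simp
  have w2: "w \<ge> 7*u^2/128" using w by simp
  have ww: "w*w \<ge> (35/8) * (7*u^2/128)" by (rule mult_mono) (use w1 w2 s in auto)
  have w4: "w^4 = (w*w)*(w*w)" by (simp add: power4_eq_xxxx)
  have "(35/8)*(35/8) \<le> w*w" by (rule mult_mono) (use w1 in auto)
  then have "w^4 \<ge> ((35/8)*(35/8)) * ((35/8) * (7*u^2/128))"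
    unfolding w4 by (rule mult_mono) (use ww s in auto)
  moreover have "(2*u+3)^2 \<le> 6*u^2"
  proof -
    have "8*u \<le> u*u" using mult_right_mono[OF assms, of u] assms by simp
    moreover have "(2*u+3)^2 = 4*(u*u) + 12*u + 9" by (simp add: power2_eq_square algebra_simps)
    moreover have "u^2 = u*u" by (simp add: power2_eq_square)
    ultimately show ?thesis using assms by linarith
  qed
  ultimately have "(2*u+3)^2 \<le> 2 * w^4" using s by linarith
  then show ?thesis using ey unfolding w_def y_def by linarith
qed

lemma numeric:
  fixes u p \<delta> cG :: real and n m :: nat
  assumes u: "u \<ge> 8" and p: "0 \<le> p" "4*p \<le> 9/16" and d: "0<\<delta>" "\<delta><1"
    and n: "real n > 2*u^2*ln(2/\<delta>)" and m: "real n \<le> 2 * real m" "m \<ge> 1"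
    and G: "cG \<le> (2*u+3)^2" "cG \<ge> 0"
  shows "cG * (2^n * p^m) < \<delta>"
proof (cases "p = 0")
  case True then show ?thesis using m d by (simp add: power_0_left)
next
  case False
  then have p0: "p > 0" using p by simp
  define q where "q = 4*p"
  have q0: "q > 0" "q \<le> 9/16" using p0 p unfolding q_def by auto
  have "n \<le> 2*m" using m by linarith
  then have "(2::real)^n \<le> 2^(2*m)" by (intro power_increasing) auto
  also have "\<dots> = 4^m" by (simp add: power_mult)
  finally have "(2::real)^n * p^m \<le> 4^m * p^m" by (intro mult_right_mono) (use p in auto)
  also have "\<dots> = q^m" unfolding q_def by (simp add: power_mult_distrib)
  also have "\<dots> = exp (real m * ln q)" using q0 by (simp add: exp_of_nat_mult)
  also have "\<dots> \<le> exp (real m * (-7/16))"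
  proof -
    have "ln q \<le> q - 1" using q0 by (intro ln_le_minus_one)
    then have "ln q \<le> -7/16" using q0 by linarith
    then show ?thesis by (intro exp_mono mult_left_mono) auto
  qed
  also have "\<dots> \<le> exp (-(7/32) * real n)" using m by (intro exp_mono) linarith
  finally have b1: "(2::real)^n * p^m \<le> exp (-(7/32) * real n)" .
  define lam where "lam = ln (2/\<delta>)"
  have l: "lam \<ge> 1/2"
  proof -
    have "ln 2 \<le> ln (2/\<delta>)" using d by (subst ln_le_cancel_iff) (auto simp: field_simps)
    then show ?thesis using ln2_ge_half unfolding lam_def by linarith
  qed
  have dl: "\<delta> = 2 * exp (-lam)" unfolding lam_def using d by (simp add: exp_minus field_simps)
  have s: "u^2 \<ge> 64" using power_mono[OF u, of 2] by simp
  have "exp (-(7/32) * real n) < exp (-(7/16) * u^2 * lam)" using n unfolding lam_def by simp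
  also have "\<dots> = exp (-lam) * exp (- ((7/16*u^2 - 1) * lam))" by (simp flip: exp_add add: algebra_simps)
  also have "\<dots> \<le> exp (-lam) * exp (- (7*u^2/32 - 1/2))"
  proof -
    have "(7/16*u^2 - 1) * (1/2) \<le> (7/16*u^2 - 1) * lam" by (rule mult_left_mono) (use l s in auto)
    then show ?thesis by (intro mult_left_mono exp_mono) auto
  qed
  finally have b2: "exp (-(7/32) * real n) < exp (-lam) * exp (- (7*u^2/32 - 1/2))" .
  have "cG * (2^n * p^m) \<le> (2*u+3)^2 * exp (-(7/32) * real n)"
    by (rule mult_mono) (use G b1 p in auto)
  also have "\<dots> < (2*u+3)^2 * (exp (-lam) * exp (- (7*u^2/32 - 1/2)))"
    by (rule mult_strict_left_mono[OF b2]) (use u in auto)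
  also have "\<dots> \<le> 2 * exp (7*u^2/32 - 1/2) * (exp (-lam) * exp (- (7*u^2/32 - 1/2)))"
    by (rule mult_right_mono[OF poly_exp[OF u]]) auto
  also have "\<dots> = \<delta>" unfolding dl by (simp add: exp_minus field_simps)
  finally show ?thesis .
qed



lemma indep_families:
  fixes M :: "'a measure" and P :: "nat \<Rightarrow> nat \<Rightarrow> 'a \<Rightarrow> real \<times> real"
  assumes pM: "prob_space M"
    and indep: "prob_space.indep_vars M (\<lambda>_. lborel) (\<lambda>p. P (fst p) (snd p)) ({1..n} \<times> {1..k})"
    and S: "S \<subseteq> {1..n}" "S \<noteq> {}" and B: "B \<in> sets lborel"
  shows "measure M (\<Inter>i\<in>S. {\<omega>\<in>space M. \<exists>j\<in>{1..k}. P i j \<omega> \<in> B})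
         = (\<Prod>i\<in>S. measure M {\<omega>\<in>space M. \<exists>j\<in>{1..k}. P i j \<omega> \<in> B})"
proof -
  interpret prob_space M by fact
  define X where "X = (\<lambda>p. P (fst p) (snd p))"
  define E where "E = (\<lambda>p. {X p -` A \<inter> space M | A. A \<in> sets (lborel :: (real\<times>real) measure)})"
  have ind: "indep_sets E ({1..n} \<times> {1..k})" and rv: "\<forall>p\<in>{1..n} \<times> {1..k}. random_variable lborel (X p)"
    using indep unfolding indep_vars_def2 E_def X_def by auto
  define I where "I = (\<lambda>i::nat. {i} \<times> {1..k})"
  have U: "(\<Union>i\<in>{1..n}. I i) = {1..n} \<times> {1..k}" unfolding I_def by auto
  have ind2: "indep_sets (\<lambda>i. sigma_sets (space M) (\<Union>p\<in>I i. E p)) {1..n}"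
  proof (rule indep_sets_collect_sigma)
    show "indep_sets E (\<Union>i\<in>{1..n}. I i)" using ind U by simp
    show "Int_stable (E p)" for p
    proof (rule Int_stableI)
      fix a b assume "a \<in> E p" "b \<in> E p"
      then obtain A A' where "a = X p -` A \<inter> space M" "A \<in> sets lborel" "b = X p -` A' \<inter> space M" "A' \<in> sets lborel"
        unfolding E_def by auto
      then show "a \<inter> b \<in> E p" unfolding E_def
        by (intro CollectI exI[of _ "A \<inter> A'"]) auto
    qed
    show "disjoint_family_on I {1..n}" unfolding I_def disjoint_family_on_def by auto
  qed
  define Ev where "Ev = (\<lambda>i. {\<omega>\<in>space M. \<exists>j\<in>{1..k}. P i j \<omega> \<in> B})"
  have mem: "Ev i \<in> sigma_sets (space M) (\<Union>p\<in>I i. E p)" if "i \<in> {1..n}" for i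
  proof -
    have sub: "(\<Union>p\<in>I i. E p) \<subseteq> Pow (space M)" unfolding E_def by auto
    interpret SA: sigma_algebra "space M" "sigma_sets (space M) (\<Union>p\<in>I i. E p)"
      using sub by (rule sigma_algebra_sigma_sets)
    have eq: "Ev i = (\<Union>j\<in>{1..k}. X (i,j) -` B \<inter> space M)" by (rule set_eqI) (simp add: Ev_def X_def; blast)
    have "X (i,j) -` B \<inter> space M \<in> sigma_sets (space M) (\<Union>p\<in>I i. E p)" if "j \<in> {1..k}" for j
    proof (rule sigma_sets.Basic)
      show "X (i, j) -` B \<inter> space M \<in> (\<Union>p\<in>I i. E p)"
        unfolding I_def E_def using that B by (intro UN_I[of "(i,j)"]) auto
    qed
    then show ?thesis unfolding eq by (intro SA.finite_UN) auto
  qed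
  have "prob (\<Inter>i\<in>S. Ev i) = (\<Prod>i\<in>S. prob (Ev i))"
    by (rule indep_setsD[OF ind2 S(1) S(2)]) (use S mem finite_subset in auto)
  then show ?thesis unfolding Ev_def by simp
qed

lemma meas_mean:
  fixes M :: "'a measure"
  assumes "\<And>i j. i \<in> {1..n} \<Longrightarrow> j \<in> {1..k} \<Longrightarrow> P i j \<in> borel_measurable M"
  shows "(\<lambda>\<omega>. mean_nearest_dist n k P \<omega> d) \<in> borel_measurable M"
  unfolding mean_nearest_dist_def nearest_dist_def
  by (intro borel_measurable_divide borel_measurable_sum borel_measurable_Min borel_measurable_dist
      borel_measurable_const assms) auto


lemma p_aux:
  fixes R C0 K x :: real
  assumes "R > 0" "C0 > 0" "K > 0"
  shows "4 * (x * (C0 * pi * (3 * (1 / (4 * pi * R * C0 * K)))^2)) = 9 * x / (4 * (pi * R^2 * C0) * K^2)"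
  using assms by (simp add: field_simps power2_eq_square)

theorem mainTheorem14:
  fixes M :: "'a measure"
    and P :: "nat \<Rightarrow> nat \<Rightarrow> 'a \<Rightarrow> real \<times> real"
    and f :: "nat \<Rightarrow> real \<times> real \<Rightarrow> real"
    and n k :: nat and R C0 \<eta> \<delta> :: real
  assumes "prob_space M"
    and "k \<ge> 1"
    and "R > 0" and "C0 > 0"
    and f_meas: "\<And>i. i \<in> {1..n} \<Longrightarrow> f i \<in> borel_measurable lborel"
    and f_nonneg: "\<And>i z. i \<in> {1..n} \<Longrightarrow> f i z \<ge> 0"
    and f_bound: "\<And>i. i \<in> {1..n} \<Longrightarrow> AE z in lborel. z \<in> cball 0 R \<longrightarrow> f i z \<le> C0"
    and f_supp: "\<And>i z. i \<in> {1..n} \<Longrightarrow> z \<notin> cball 0 R \<Longrightarrow> f i z = 0"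
    and distr: "\<And>i j. i \<in> {1..n} \<Longrightarrow> j \<in> {1..k} \<Longrightarrow>
                  distributed M lborel (P i j) (\<lambda>z. ennreal (f i z))"
    and indep: "prob_space.indep_vars M (\<lambda>_. lborel) (\<lambda>p. P (fst p) (snd p)) ({1..n} \<times> {1..k})"
    and "\<eta> > 0" and "0 < \<delta>" and "\<delta> < 1"
    and "real n > 2 * R^2 / \<eta>^2 * ln (2 / \<delta>)"
  shows "measure M {\<omega> \<in> space M. \<forall>z \<in> cball 0 R.
            mean_nearest_dist n k P \<omega> z \<ge> 1 / (4 * pi * R * C0 * (real k + 1)) - \<eta>} > 1 - \<delta>"
proof -
  interpret prob_space M by fact
  define L where "L = 1 / (4 * pi * R * C0 * (real k + 1))"
  define good where "good = {\<omega> \<in> space M. \<forall>z \<in> cball 0 R. mean_nearest_dist n k P \<omega> z \<ge> L - \<eta>}"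
  have lam0: "ln (2/\<delta>) > 0" using \<open>0 < \<delta>\<close> \<open>\<delta> < 1\<close> by simp
  have "2 * R^2 / \<eta>^2 * ln (2 / \<delta>) > 0" using lam0 \<open>R > 0\<close> \<open>\<eta> > 0\<close> by simp
  then have n0: "n > 0" using \<open>real n > 2 * R^2 / \<eta>^2 * ln (2 / \<delta>)\<close> by linarith
  have L0: "L > 0" unfolding L_def using \<open>R > 0\<close> \<open>C0 > 0\<close> by simp
  have Pmeas: "P i j \<in> borel_measurable M" if "i \<in> {1..n}" "j \<in> {1..k}" for i j
    using distr[OF that] unfolding distributed_def by (simp add: measurable_lborel1)
  have AEf: "AE z in lborel. f i z \<le> C0" if "i \<in> {1..n}" for i
    using f_bound[OF that] by eventually_elim (use f_supp[OF that] \<open>C0 > 0\<close> in fastforce)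
  show ?thesis
  proof (cases "\<eta> \<ge> L")
    case True
    have h: "L - \<eta> \<le> mean_nearest_dist n k P \<omega> z" for \<omega> z
      using mean_nonneg[OF \<open>k \<ge> 1\<close>, of n P \<omega> z] True by linarith
    have "good = space M" unfolding good_def using h by auto
    then show ?thesis using \<open>0 < \<delta>\<close> unfolding good_def L_def by (simp add: prob_space)
  next
    case False
    then have \<eta>L: "\<eta> < L" by simp
    obtain D :: "(real\<times>real) set" where "countable D" and D: "\<And>X. open X \<Longrightarrow> X \<noteq> {} \<Longrightarrow> \<exists>d\<in>D. d \<in> X"
      by (erule countable_dense_setE)
    have good_eq: "good = space M - (\<Union>d\<in>D \<inter> ball 0 R. {\<omega>\<in>space M. mean_nearest_dist n k P \<omega> d < L - \<eta>})"
    proof (intro equalityI subsetI)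
      fix \<omega> assume "\<omega> \<in> good" then show "\<omega> \<in> space M - (\<Union>d\<in>D \<inter> ball 0 R. {\<omega>\<in>space M. mean_nearest_dist n k P \<omega> d < L - \<eta>})"
        unfolding good_def by (auto simp: not_less)
    next
      fix \<omega> assume \<omega>: "\<omega> \<in> space M - (\<Union>d\<in>D \<inter> ball 0 R. {\<omega>\<in>space M. mean_nearest_dist n k P \<omega> d < L - \<eta>})"
      have "L - \<eta> \<le> mean_nearest_dist n k P \<omega> z" if z: "z \<in> cball 0 R" for z
      proof (rule ccontr)
        assume nt: "\<not> ?thesis"
        define e where "e = L - \<eta> - mean_nearest_dist n k P \<omega> z"
        have e0: "e > 0" using nt unfolding e_def by simp
        have "z \<in> ball z e \<inter> closure (ball 0 R)" using z e0 \<open>R > 0\<close> by simp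
        then have "ball z e \<inter> closure (ball 0 R) \<noteq> {}" by blast
        then have "ball z e \<inter> ball 0 R \<noteq> {}" using open_Int_closure_eq_empty[of "ball z e" "ball 0 R"] by auto
        moreover have "open (ball z e \<inter> ball 0 R)" by auto
        ultimately have "\<exists>d\<in>D. d \<in> ball z e \<inter> ball 0 R" using D[of "ball z e \<inter> ball 0 R"] by blast
        then obtain d where d: "d \<in> D" "d \<in> ball z e" "d \<in> ball 0 R" by blast
        have "mean_nearest_dist n k P \<omega> d \<le> mean_nearest_dist n k P \<omega> z + dist d z"
          by (rule mean_lip[OF \<open>k \<ge> 1\<close> n0])
        also have "\<dots> < L - \<eta>" using d(2) unfolding e_def by (simp add: dist_commute)
        finally show False using \<omega> d by auto
      qed
      then show "\<omega> \<in> good" using \<omega> unfolding good_def by auto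
    qed
    have good_ev: "good \<in> events"
    proof -
      have "(\<Union>d\<in>D \<inter> ball 0 R. {\<omega>\<in>space M. mean_nearest_dist n k P \<omega> d < L - \<eta>}) \<in> events"
      proof (rule sets.countable_UN')
        show "countable (D \<inter> ball 0 R)" using \<open>countable D\<close> by simp
        show "(\<lambda>d. {\<omega>\<in>space M. mean_nearest_dist n k P \<omega> d < L - \<eta>}) ` (D \<inter> ball 0 R) \<subseteq> events"
        proof
          fix A assume "A \<in> (\<lambda>d. {\<omega>\<in>space M. mean_nearest_dist n k P \<omega> d < L - \<eta>}) ` (D \<inter> ball 0 R)"
          then obtain d where A: "A = {\<omega>\<in>space M. mean_nearest_dist n k P \<omega> d < L - \<eta>}" by auto
          have "(\<lambda>\<omega>. mean_nearest_dist n k P \<omega> d) \<in> borel_measurable M"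
            by (rule meas_mean) (rule Pmeas)
          then show "A \<in> events" unfolding A by measurable
        qed
      qed
      then show ?thesis unfolding good_eq by auto
    qed
    define u where "u = R / L"
    have uval: "u = 4 * (pi * R^2 * C0) * (real k + 1)"
      unfolding u_def L_def using \<open>R > 0\<close> \<open>C0 > 0\<close> by (simp add: field_simps power2_eq_square)
    have area: "1 \<le> C0 * pi * R^2"
      by (rule area_ge[OF \<open>prob_space M\<close> distr[of 1 1] AEf[of 1]]) (use n0 \<open>k \<ge> 1\<close> \<open>C0 > 0\<close> \<open>R > 0\<close> f_supp[of 1] in auto)
    have a1: "pi * R^2 * C0 \<ge> 1" using area by (simp add: algebra_simps)
    have u8: "u \<ge> 8"
    proof -
      have "4 * 1 * (1+1) \<le> 4 * (pi * R^2 * C0) * (real k + 1)"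
        by (intro mult_mono) (use a1 \<open>k \<ge> 1\<close> in auto)
      then show ?thesis unfolding uval by simp
    qed
    define p where "p = real k * (C0 * pi * (3*L)^2)"
    have p0: "p \<ge> 0" unfolding p_def using \<open>C0 > 0\<close> by simp
    have p4: "4 * p \<le> 9/16"
    proof -
      have "4 * p = 9 * real k / (4 * (pi * R^2 * C0) * (real k + 1)^2)"
        unfolding p_def L_def using p_aux[OF \<open>R > 0\<close> \<open>C0 > 0\<close>, of "real k + 1" "real k"] by simp
      also have "\<dots> \<le> 9/16"
      proof -
        have sq: "0 \<le> (real k - 1) * (real k - 1)" by simp
        have "4 * real k \<le> (real k + 1)^2" using sq by (simp add: power2_eq_square algebra_simps)
        then have "16 * real k \<le> 4 * 1 * (real k + 1)^2" by simp
        also have "\<dots> \<le> 4 * (pi * R^2 * C0) * (real k + 1)^2" by (intro mult_mono) (use a1 in auto)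
        finally show ?thesis using a1 by (simp add: divide_le_eq)
      qed
      finally show ?thesis .
    qed
    have nbound: "real n > 2 * u^2 * ln (2/\<delta>)"
    proof -
      have "R/L \<le> R/\<eta>" using \<eta>L \<open>\<eta> > 0\<close> \<open>R > 0\<close> by (intro divide_left_mono) auto
      then have "(R/L)^2 \<le> (R/\<eta>)^2" by (rule power_mono) (use \<open>R > 0\<close> L0 in auto)
      then have "u^2 \<le> R^2/\<eta>^2" unfolding u_def by (simp add: power_divide)
      then have "2 * u^2 * ln (2/\<delta>) \<le> 2 * R^2 / \<eta>^2 * ln (2 / \<delta>)" using lam0 by (intro mult_right_mono) auto
      then show ?thesis using \<open>real n > 2 * R^2 / \<eta>^2 * ln (2 / \<delta>)\<close> by linarith
    qed
    obtain G :: "(real\<times>real) set" where Gfin: "finite G" and Gcard: "real (card G) \<le> (2*R/L+3)^2"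
      and Gcov: "\<forall>z\<in>cball 0 R. \<exists>g\<in>G. dist z g \<le> L"
      using grid[OF L0, of R] \<open>R > 0\<close> by auto
    have Gcard': "real (card G) \<le> (2*u+3)^2" using Gcard unfolding u_def by simp
    define m where "m = n div 2 + 1"
    define Sm where "Sm = {S. S \<subseteq> {1..n} \<and> card S = m}"
    define A where "A = (\<lambda>g i. {\<omega>\<in>space M. \<exists>j\<in>{1..k}. P i j \<omega> \<in> ball g (3*L)})"
    define U where "U = (\<Union>g\<in>G. \<Union>S\<in>Sm. \<Inter>i\<in>S. A g i)"
    have Smfin: "finite Sm" unfolding Sm_def by (rule finite_subset[of _ "Pow {1..n}"]) auto
    have Sm_ne: "S \<noteq> {}" if "S \<in> Sm" for S using that unfolding Sm_def m_def by auto
    have A_ev: "A g i \<in> events" if "i \<in> {1..n}" for g i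
    proof -
      have "A g i = (\<Union>j\<in>{1..k}. P i j -` ball g (3*L) \<inter> space M)"
        by (rule set_eqI) (simp add: A_def; blast)
      also have "\<dots> \<in> events" using Pmeas[OF that] by (intro sets.finite_UN) (auto simp: measurable_sets_borel)
      finally show ?thesis .
    qed
    have int_ev: "(\<Inter>i\<in>S. A g i) \<in> events" if "S \<in> Sm" for g S
    proof -
      have S: "S \<subseteq> {1..n}" "S \<noteq> {}" using that Sm_ne[OF that] unfolding Sm_def by auto
      have fS: "finite S" using S(1) finite_subset by blast
      have "\<And>i. i \<in> S \<Longrightarrow> A g i \<in> events" using S(1) A_ev by blast
      then show ?thesis by (rule sets.finite_INT[OF fS S(2)])
    qed
    have U_ev: "U \<in> events" unfolding U_def using Gfin Smfin int_ev by (intro sets.finite_UN) auto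
    have A_prob: "prob (A g i) \<le> p" if "i \<in> {1..n}" for g i
    proof -
      have "prob (A g i) = prob (\<Union>j\<in>{1..k}. P i j -` ball g (3*L) \<inter> space M)" by (rule arg_cong[where f=prob], rule set_eqI) (simp add: A_def; blast)
      also have "\<dots> \<le> (\<Sum>j\<in>{1..k}. prob (P i j -` ball g (3*L) \<inter> space M))"
        using Pmeas[OF that] by (intro measure_UNION_le) (auto simp: measurable_sets_borel)
      also have "\<dots> \<le> (\<Sum>j\<in>{1..k}. C0 * pi * (3*L)^2)"
        by (intro sum_mono ball_prob[OF \<open>prob_space M\<close> distr[OF that] AEf[OF that]]) (use \<open>C0 > 0\<close> L0 in auto)
      also have "\<dots> = p" unfolding p_def by simp
      finally show ?thesis .
    qed
    have int_prob: "prob (\<Inter>i\<in>S. A g i) \<le> p ^ m" if "S \<in> Sm" for g S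
    proof -
      have S: "S \<subseteq> {1..n}" "card S = m" using that unfolding Sm_def by auto
      have "prob (\<Inter>i\<in>S. A g i) = (\<Prod>i\<in>S. prob (A g i))"
        unfolding A_def by (rule indep_families[OF \<open>prob_space M\<close> indep S(1) Sm_ne[OF that]]) simp
      also have "\<dots> \<le> (\<Prod>i\<in>S. p)"
      proof (rule prod_mono)
        fix i assume "i \<in> S"
        then have "i \<in> {1..n}" using S(1) by blast
        then show "0 \<le> prob (A g i) \<and> prob (A g i) \<le> p" using A_prob[of i g] by simp
      qed
      also have "\<dots> = p ^ m" using S by simp
      finally show ?thesis .
    qed
    have "prob U \<le> (\<Sum>g\<in>G. prob (\<Union>S\<in>Sm. \<Inter>i\<in>S. A g i))"
      unfolding U_def using Gfin Smfin int_ev by (intro measure_UNION_le) auto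
    also have "\<dots> \<le> (\<Sum>g\<in>G. \<Sum>S\<in>Sm. prob (\<Inter>i\<in>S. A g i))"
      using Smfin int_ev by (intro sum_mono measure_UNION_le) auto
    also have "\<dots> \<le> (\<Sum>g\<in>G. \<Sum>S\<in>Sm. p ^ m)"
      by (intro sum_mono int_prob)
    also have "\<dots> = real (card G) * (real (card Sm) * p ^ m)" by simp
    also have "\<dots> \<le> real (card G) * (2 ^ n * p ^ m)"
    proof -
      have "card Sm = n choose m" unfolding Sm_def using n_subsets[of "{1..n}" m] by simp
      then have "real (card Sm) \<le> 2 ^ n" using binomial_le_pow2[of n m] by (metis of_nat_le_iff of_nat_numeral of_nat_power)
      then show ?thesis using p0 by (intro mult_left_mono mult_right_mono) auto
    qed
    also have "\<dots> < \<delta>"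
      by (rule numeric[OF u8 p0 p4 \<open>0 < \<delta>\<close> \<open>\<delta> < 1\<close> nbound _ _ Gcard']) (auto simp: m_def)
    finally have PU: "prob U < \<delta>" .
    have sub: "space M - U \<subseteq> good"
    proof
      fix \<omega> assume \<omega>: "\<omega> \<in> space M - U"
      have "L - \<eta> \<le> mean_nearest_dist n k P \<omega> z" if z: "z \<in> cball 0 R" for z
      proof (rule ccontr)
        assume "\<not> ?thesis"
        then have lt: "mean_nearest_dist n k P \<omega> z < L" using \<open>\<eta> > 0\<close> by simp
        define Z where "Z = (\<lambda>i. nearest_dist k P i \<omega> z)"
        define S0 where "S0 = {i\<in>{1..n}. Z i < 2*L}"
        have sumlt: "(\<Sum>i=1..n. Z i) < real n * L"
          using lt n0 unfolding mean_nearest_dist_def Z_def by (simp add: divide_less_eq mult.commute)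
        have "(\<Sum>i=1..n. Z i) = (\<Sum>i\<in>S0. Z i) + (\<Sum>i\<in>{1..n}-S0. Z i)"
          unfolding S0_def by (subst sum.subset_diff[of "{i\<in>{1..n}. Z i < 2*L}"]) auto
        moreover have "(\<Sum>i\<in>S0. Z i) \<ge> 0" unfolding Z_def by (intro sum_nonneg nd_nonneg \<open>k \<ge> 1\<close>)
        moreover have "(\<Sum>i\<in>{1..n}-S0. Z i) \<ge> (\<Sum>i\<in>{1..n}-S0. 2*L)"
          by (intro sum_mono) (auto simp: S0_def not_less)
        ultimately have "real (card ({1..n}-S0)) * (2 * L) < real n * L" using sumlt by simp
        then have "2 * L * real (card ({1..n}-S0)) < real n * L" by (simp add: mult.commute)
        then have "2 * real (card ({1..n}-S0)) < real n" using L0 by simp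
        moreover have "card ({1..n}-S0) = n - card S0" unfolding S0_def by (subst card_Diff_subset) auto
        moreover have "card S0 \<le> card {1..n}" unfolding S0_def by (rule card_mono) auto
        ultimately have "m \<le> card S0" unfolding m_def by linarith
        then obtain S where S: "S \<subseteq> S0" "card S = m" by (meson obtain_subset_with_card_n)
        have SSm: "S \<in> Sm" using S unfolding Sm_def S0_def by auto
        obtain g where g: "g \<in> G" "dist z g \<le> L" using Gcov z by blast
        have "\<omega> \<in> A g i" if "i \<in> S" for i
        proof -
          have "Z i < 2*L" using S that unfolding S0_def by auto
          then have "\<exists>j\<in>{1..k}. dist (P i j \<omega>) z < 2*L"
            unfolding Z_def by (rule nd_lt[OF \<open>k \<ge> 1\<close>])
          then obtain j where j: "j \<in> {1..k}" "dist (P i j \<omega>) z < 2*L" by blast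
          have "dist (P i j \<omega>) g \<le> dist (P i j \<omega>) z + dist z g" by (rule dist_triangle)
          then have "P i j \<omega> \<in> ball g (3*L)" using j g by (simp add: dist_commute)
          then show ?thesis unfolding A_def using \<omega> j by auto
        qed
        then have "\<omega> \<in> U" unfolding U_def using SSm g(1) by blast
        then show False using \<omega> by auto
      qed
      then show "\<omega> \<in> good" using \<omega> unfolding good_def by auto
    qed
    have "1 - prob U = prob (space M - U)" using U_ev by (simp add: prob_compl)
    also have "\<dots> \<le> prob good" using sub good_ev by (intro finite_measure_mono) auto
    finally show ?thesis using PU unfolding good_def L_def by simp
  qed
qed

end
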